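(* If $n>2$ is odd, then all eigenvalues of the operator $c_1\star$ of quantum multiplication by the first Chern class acting on the small quantum cohomology $\operatorname{QH}(\operatorname{Gr}(2,n))$ have algebraic multiplicity one.
   Context: $\operatorname{QH}(\operatorname{Gr}(2,n))$ denotes the small quantum cohomology of the complex Grassmannian of 2-planes in $\mathbb{C}^n$ with complex coefficients (quantum parameter specialized to $1$, as in the monotone setting); it has complex dimension $\binom{n}{2}$. *)

theory Defs
  imports "Jordan_Normal_Form.Char_Poly"
begin

text \<open>Schubert basis of H^*(Gr(2,n)): partitions (a,b) with n-2 >= a >= b >= 0,
  listed in a fixed order.\<close>
definition gr2_parts :: "nat \<Rightarrow> (nat \<times> nat) list" where
  "gr2_parts n = concat (map (\<lambda>a. map (\<lambda>b. (a, b)) [0..<Suc a]) [0..<n - 1])"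

text \<open>Coefficient of sigma_mu in sigma_1 * sigma_lambda in QH(Gr(2,n)) with q = 1
  (quantum Pieri rule of Bertram): classical Pieri terms (add one box inside the
  2 x (n-2) rectangle) plus the quantum term q sigma_(b-1,0) when a = n-2 and b >= 1.\<close>
definition c1_coeff :: "nat \<Rightarrow> nat \<times> nat \<Rightarrow> nat \<times> nat \<Rightarrow> complex" where
  "c1_coeff n mu lam = (case lam of (a, b) \<Rightarrow>
      (if mu = (a + 1, b) \<and> a + 1 \<le> n - 2 then 1 else 0)
    + (if mu = (a, b + 1) \<and> b + 1 \<le> a then 1 else 0)
    + (if a = n - 2 \<and> 1 \<le> b \<and> mu = (b - 1, 0) then 1 else 0))"

text \<open>Matrix of the operator c_1 * on QH(Gr(2,n)) in the Schubert basis
  (column j = image of the j-th basis vector).\<close>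
definition c1_star_mat :: "nat \<Rightarrow> complex mat" where
  "c1_star_mat n = mat (length (gr2_parts n)) (length (gr2_parts n))
     (\<lambda>(i, j). c1_coeff n (gr2_parts n ! i) (gr2_parts n ! j))"

end

theory Submission
  imports Defs
begin


definition GG :: "nat \<Rightarrow> (nat \<times> nat) list" where
  "GG k = concat (map (\<lambda>a. map (\<lambda>b. (a, b)) [0..<Suc a]) [0..<k])"

lemma GG_Suc: "GG (Suc k) = GG k @ map (\<lambda>b. (k, b)) [0..<Suc k]"
  unfolding GG_def by simp

lemma GG_props: "distinct (GG k) \<and> set (GG k) = {(a,b). b \<le> a \<and> a < k} \<and> 2 * length (GG k) = k * (k + 1)"
proof (induction k)
  case 0 then show ?case by (simp add: GG_def)
next
  case (Suc k)
  then show ?case unfolding GG_Suc by (auto simp: distinct_map inj_on_def)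
qed

lemma parts_eq: "gr2_parts n = GG (n - 1)" unfolding gr2_parts_def GG_def by simp

lemma parts_distinct: "distinct (gr2_parts n)" using GG_props parts_eq by metis
lemma parts_set: "set (gr2_parts n) = {(a,b). b \<le> a \<and> a < n - 1}" using GG_props parts_eq by metis
lemma parts_len: "length (gr2_parts n) = n choose 2"
proof -
  have "2 * length (gr2_parts n) = (n - 1) * n" using GG_props parts_eq by (metis Suc_eq_plus1 diff_Suc_1 mult.commute nat.exhaust diff_0_eq_0 mult_0)
  then show ?thesis by (simp add: choose_two mult.commute)
qed



lemma delta_sum: "finite S \<Longrightarrow> (\<Sum>p\<in>S. (if p = t \<and> C then 1 else 0) * (g p :: complex)) = (if C \<and> t \<in> S then g t else 0)"
proof -
  assume f: "finite S"
  have "\<And>p. (if p = t \<and> C then 1 else 0) * g p = (if p = t then (if C then g t else 0) else 0)" by auto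
  then show ?thesis using f by (simp add: sum.delta)
qed

lemma sum_coeff:
  assumes "b \<le> a" "a < n - 1"
  shows "(\<Sum>p\<in>set (gr2_parts n). c1_coeff n p (a,b) * g p) =
     (if a+1 \<le> n-2 then g (a+1,b) else 0) + (if b+1\<le>a then g (a,b+1) else 0) + (if a=n-2 \<and> 1\<le>b then g (b-1,0) else 0)"
proof -
  have "(\<Sum>p\<in>set (gr2_parts n). c1_coeff n p (a,b) * g p) =
    (\<Sum>p\<in>set (gr2_parts n). (if p = (a + 1, b) \<and> a + 1 \<le> n - 2 then 1 else 0) * g p) +
    (\<Sum>p\<in>set (gr2_parts n). (if p = (a, b + 1) \<and> b + 1 \<le> a then 1 else 0) * g p) +
    (\<Sum>p\<in>set (gr2_parts n). (if p = (b - 1, 0) \<and> (a = n - 2 \<and> 1 \<le> b) then 1 else 0) * g p)"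
    unfolding c1_coeff_def by (simp add: distrib_right sum.distrib conj_ac)
  also have "\<dots> = (if a+1 \<le> n-2 then g (a+1,b) else 0) + (if b+1\<le>a then g (a,b+1) else 0) + (if a=n-2 \<and> 1\<le>b then g (b-1,0) else 0)"
    unfolding delta_sum[OF finite_set] using assms by (auto simp: parts_set)
  finally show ?thesis .
qed

definition ff :: "complex \<Rightarrow> complex \<Rightarrow> nat \<times> nat \<Rightarrow> complex" where
  "ff x y p = x^(fst p+1)*y^(snd p) - y^(fst p+1)*x^(snd p)"

lemma pieri:
  assumes "b \<le> a" "a < n - 1" "x^n = -1" "y^n = -1" "n > 2"
  shows "(\<Sum>p\<in>set (gr2_parts n). c1_coeff n p (a,b) * ff x y p) = (x + y) * ff x y (a,b)"
proof -
  have t1: "(if a+1 \<le> n-2 then ff x y (a+1,b) else 0) + (if a=n-2 \<and> 1\<le>b then ff x y (b-1,0) else 0) = ff x y (a+1,b)"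
  proof (cases "a+1 \<le> n-2")
    case True then show ?thesis by auto
  next
    case False
    then have a: "a = n - 2" "a + 1 = n - 1" "a+2 = n" using assms by auto
    have e: "a+1+1 = n" using a by simp
    have "ff x y (a+1,b) = x^b - y^b" unfolding ff_def fst_conv snd_conv e using assms by simp
    moreover have "1 \<le> b \<Longrightarrow> ff x y (b-1,0) = x^b - y^b" by (cases b) (simp_all add: ff_def)
    ultimately show ?thesis using False a by (cases "b = 0") auto
  qed
  have t2: "(if b+1\<le>a then ff x y (a,b+1) else 0) = ff x y (a,b+1)"
  proof (cases "b+1 \<le> a")
    case False then have "b = a" using assms by simp
    then show ?thesis using False by (simp add: ff_def algebra_simps)
  qed simp
  have t3: "(x + y) * ff x y (a,b) = ff x y (a+1,b) + ff x y (a,b+1)"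
    unfolding ff_def by (simp add: algebra_simps)
  show ?thesis unfolding sum_coeff[OF assms(1,2)] t3 using t1 t2 by (simp add: algebra_simps)
qed



lemma eig:
  assumes n: "n > 2" and x: "x^n = -1" and y: "y^n = -1" and xy: "x \<noteq> y"
  shows "eigenvalue (c1_star_mat n) (x + y)"
proof -
  define L where "L = gr2_parts n"
  define N where "N = length L"
  define A where "A = c1_star_mat n"
  have A: "A \<in> carrier_mat N N" unfolding A_def c1_star_mat_def N_def L_def by simp
  define w where "w = vec N (\<lambda>i. ff x y (L ! i))"
  have w: "w \<in> carrier_vec N" unfolding w_def by simp
  have prod: "(transpose_mat A *\<^sub>v w) $ j = (x + y) * w $ j" if j: "j < N" for j
  proof -
    have "(transpose_mat A *\<^sub>v w) $ j = (\<Sum>i = 0..<N. c1_coeff n (L ! i) (L ! j) * ff x y (L ! i))"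
    proof -
      have "(transpose_mat A *\<^sub>v w) $ j = (\<Sum>i = 0..<N. A $$ (i,j) * w $ i)"
        using j A w by (simp add: scalar_prod_def)
      also have "\<dots> = (\<Sum>i = 0..<N. c1_coeff n (L ! i) (L ! j) * ff x y (L ! i))"
        by (rule sum.cong) (use j in \<open>auto simp: A_def c1_star_mat_def w_def L_def N_def\<close>)
      finally show ?thesis .
    qed
    also have "\<dots> = sum_list (map (\<lambda>p. c1_coeff n p (L ! j) * ff x y p) L)"
      by (auto simp: sum_list_sum_nth N_def intro!: sum.cong)
    also have "\<dots> = (\<Sum>p\<in>set L. c1_coeff n p (L ! j) * ff x y p)"
      by (rule sum_list_distinct_conv_sum_set) (simp add: L_def parts_distinct)
    also have "\<dots> = (x + y) * ff x y (L ! j)"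
    proof -
      obtain a b where ab: "L ! j = (a, b)" by fastforce
      have "(a,b) \<in> set L" using j ab N_def by (metis nth_mem)
      then have ba: "b \<le> a" "a < n - 1" unfolding L_def parts_set by auto
      then show ?thesis using pieri[OF ba x y n] ab unfolding L_def by simp
    qed
    finally show ?thesis using j unfolding w_def by simp
  qed
  have "(0,0) \<in> set L" unfolding L_def parts_set using n by auto
  then obtain i where i: "i < N" "L ! i = (0,0)" unfolding N_def by (metis in_set_conv_nth)
  have "w $ i \<noteq> 0" using i xy unfolding w_def ff_def by simp
  then have "w \<noteq> 0\<^sub>v N" using i by auto
  then have "eigenvector (transpose_mat A) w (x + y)"
    unfolding eigenvector_def using A w prod by (auto intro!: eq_vecI)
  then have "eigenvalue (transpose_mat A) (x + y)" unfolding eigenvalue_def by blast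
  then have "poly (char_poly (transpose_mat A)) (x + y) = 0"
    using eigenvalue_root_char_poly[of "transpose_mat A" N] A by auto
  then have "poly (char_poly A) (x + y) = 0" using A by simp
  then show ?thesis unfolding A_def[symmetric] using eigenvalue_root_char_poly[OF A] by simp
qed



lemma unit_norm: assumes "odd n" "(x::complex)^n = -1" shows "norm x = 1"
proof -
  have "norm x ^ n = 1" using assms by (metis norm_minus_cancel norm_one norm_power)
  moreover have "n > 0" using assms by (cases n) auto
  ultimately show ?thesis using power_eq_imp_eq_base[of "norm x" n 1] by simp
qed

lemma inv_cnj: assumes "norm (x::complex) = 1" shows "cnj x = 1 / x"
proof -
  have "x * cnj x = 1" using complex_norm_square[of x] assms by simp
  moreover have "x \<noteq> 0" using assms by auto
  ultimately show ?thesis by (simp add: field_simps)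
qed

lemma prod_from_sum:
  assumes "odd n" "x^n = -1" "y^n = -1"
  shows "x + y \<noteq> 0 \<and> x * y = (x + y) / cnj (x + y)"
proof -
  have nz: "x + y \<noteq> 0"
  proof
    assume "x + y = 0"
    then have "x = -y" by (simp add: eq_neg_iff_add_eq_0)
    then have "x^n = - (y^n)" using assms(1) by (simp add: power_minus_odd)
    then show False using assms by simp
  qed
  have xy: "x \<noteq> 0" "y \<noteq> 0" using unit_norm[OF assms(1,2)] unit_norm[OF assms(1,3)] by auto
  have c: "cnj (x + y) = (x + y) / (x * y)"
    using inv_cnj[OF unit_norm[OF assms(1,2)]] inv_cnj[OF unit_norm[OF assms(1,3)]] xy
    by (simp add: field_simps)
  have "(x+y)/cnj(x+y) = x*y" unfolding c using nz xy by simp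
  then show ?thesis using nz by simp
qed

lemma inj_sum:
  fixes x y u v :: complex
  assumes "odd n" "x^n = -1" "y^n = -1" "u^n = -1" "v^n = -1" "x + y = u + v"
  shows "{x, y} = {u, v}"
proof -
  have p: "x * y = u * v" using prod_from_sum[OF assms(1,2,3)] prod_from_sum[OF assms(1,4,5)] assms(6) by simp
  have "(u - x) * (u - y) = 0"
  proof -
    have "(u - x) * (u - y) = u*u - (x + y) * u + x * y" by (simp add: algebra_simps)
    also have "\<dots> = 0" unfolding assms(6) p by (simp add: algebra_simps)
    finally show ?thesis .
  qed
  then have "u = x \<or> u = y" by simp
  then show ?thesis using assms(6) by auto
qed



lemma card_R: assumes "odd n" shows "card {z::complex. z^n = -1} = n"
proof -
  have n: "n > 0" using assms by (cases n) auto
  have "{z::complex. z^n = -1} = uminus ` {z. z^n = 1}"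
  proof (intro equalityI subsetI)
    fix z :: complex assume "z \<in> {z. z^n = -1}"
    then have "(-z)^n = 1" using assms by (simp add: power_minus_odd)
    then show "z \<in> uminus ` {z. z^n = 1}" by (metis (mono_tags) image_eqI mem_Collect_eq minus_minus)
  next
    fix z :: complex assume "z \<in> uminus ` {z. z^n = 1}"
    then show "z \<in> {z. z^n = -1}" using assms by (auto simp: power_minus_odd)
  qed
  then have "card {z::complex. z^n = -1} = card {z::complex. z^n = 1}"
    by (simp add: card_image)
  then show ?thesis using card_roots_unity_eq[OF n] by simp
qed

theorem lemma4p6:
  fixes n :: nat
  assumes "n > 2" and "odd n"
  shows "\<forall>e. eigenvalue (c1_star_mat n) e \<longrightarrow> order e (char_poly (c1_star_mat n)) = 1"
proof -
  define A where "A = c1_star_mat n"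
  define N where "N = length (gr2_parts n)"
  have A: "A \<in> carrier_mat N N" unfolding A_def c1_star_mat_def N_def by simp
  define p where "p = char_poly A"
  have degp: "degree p = N" and cp: "coeff p N = 1" using degree_monic_char_poly[OF A] p_def by auto
  have p0: "p \<noteq> 0" using cp by auto
  define R where "R = {z::complex. z^n = -1}"
  have cardR: "card R = n" unfolding R_def using card_R[OF assms(2)] .
  have finR: "finite R" using cardR assms(1) by (metis card.infinite not_less_zero gr_implies_not0)
  define T where "T = {S. S \<subseteq> R \<and> card S = 2}"
  have cardT: "card T = N" unfolding T_def N_def parts_len n_subsets[OF finR] cardR ..
  define E where "E = (\<lambda>S. \<Sum>S) ` T"
  have inj: "inj_on (\<lambda>S. \<Sum>S) T"
  proof (rule inj_onI)
    fix S1 S2 assume S1: "S1 \<in> T" and S2: "S2 \<in> T" and eq: "\<Sum>S1 = \<Sum>S2"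
    obtain x y where xy: "S1 = {x,y}" "x \<noteq> y" using S1 unfolding T_def card_2_iff by blast
    obtain u v where uv: "S2 = {u,v}" "u \<noteq> v" using S2 unfolding T_def card_2_iff by blast
    have "x^n = -1" "y^n = -1" using S1 xy unfolding T_def R_def by auto
    moreover have "u^n = -1" "v^n = -1" using S2 uv unfolding T_def R_def by auto
    moreover have "x + y = u + v" using eq xy uv by simp
    ultimately show "S1 = S2" using inj_sum[OF assms(2)] xy uv by metis
  qed
  have cardE: "card E = N" unfolding E_def using card_image[OF inj] cardT by simp
  have Eroot: "E \<subseteq> {x. poly p x = 0}"
  proof
    fix e assume "e \<in> E"
    then obtain S where S: "S \<in> T" "e = \<Sum>S" unfolding E_def by blast
    obtain x y where xy: "S = {x,y}" "x \<noteq> y" using S unfolding T_def card_2_iff by blast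
    have "x^n = -1" "y^n = -1" using S xy unfolding T_def R_def by auto
    then have "eigenvalue A (x + y)" unfolding A_def using eig assms(1) xy(2) by blast
    then have "poly p (x + y) = 0" unfolding p_def using eigenvalue_root_char_poly[OF A] by blast
    then show "e \<in> {x. poly p x = 0}" using S xy by simp
  qed
  define M where "M = proots p"
  have setM: "set_mset M = {x. poly p x = 0}" unfolding M_def using p0 by simp
  have sizeM: "size M \<le> N" unfolding M_def using size_proots_le degp by metis
  have sizeEq: "size M = (\<Sum>x\<in>set_mset M. count M x)" by (simp add: size_multiset_overloaded_eq)
  have cardle: "N \<le> card (set_mset M)" unfolding cardE[symmetric]
    by (rule card_mono[OF finite_set_mset]) (use Eroot setM in auto)
  show ?thesis
  proof (intro allI impI)
    fix e assume "eigenvalue (c1_star_mat n) e"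
    then have "poly p e = 0" unfolding p_def A_def[symmetric] using eigenvalue_root_char_poly[OF A] by blast
    then have eM: "e \<in> set_mset M" using setM by simp
    have ge1: "\<forall>x\<in>set_mset M. 1 \<le> count M x" by auto
    have "count M e = 1"
    proof (rule ccontr)
      assume "count M e \<noteq> 1"
      moreover have "1 \<le> count M e" using ge1 eM by blast
      ultimately have "1 < count M e" by linarith
      then have "(\<Sum>x\<in>set_mset M. (1::nat)) < (\<Sum>x\<in>set_mset M. count M x)"
        using ge1 eM by (intro sum_strict_mono_ex1) auto
      then show False using sizeEq sizeM cardle by simp
    qed
    then show "order e (char_poly (c1_star_mat n)) = 1" using p0 unfolding M_def p_def A_def by simp
  qed
qed

end
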